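(* Let $\mathtt b\ge2$ and $\mathrm o\in\mathbb W^*_{\mathtt b}$ with $|\mathrm o|=0$. Let $(Y_n)_{n\in\mathbb N}$ be a Markov chain on $\mathbb W^*_{\mathtt b}$ with transition kernel $p_{\mathtt b}$ and $Y_0=\mathrm o$. Let $f:[0,\infty)\to[0,1]$ satisfy $\sum_{p\in\mathbb N}\sqrt{f(p)}<\infty$. Then almost surely $\sum_{n\in\mathbb N}f\big(-|\mathrm o\wedge Y_n|\big)<\infty$.
   Context: $\mathbb W^*_{\mathtt b}$: sequences $x=(a_k)_{k\le m}$, $m\in\mathbb Z$, with $a_k\in\{1,\dots,\mathtt b\}$; $|x|=m$ is the (relative) height; parent $\overleftarrow x=(a_k)_{k\le m-1}$; children $x\ast(i)$ obtained by appending letter $i$ at index $m+1$. Kernel $p_{\mathtt b}(x,\cdot)$: to $\overleftarrow x$ w.p. $1/2$, to each $x\ast(i)$ w.p. $1/(2\mathtt b)$. For $x,y$ coinciding at all sufficiently negative indices, $x\wedge y=(a_k)_{k\le b}$ with $b$ the largest integer such that $x$ and $y$ agree at all indices $\le b$ (this holds for $\mathrm o$ and $Y_n$). *)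

theory Defs
  imports "HOL-Probability.Probability"
begin

text \<open>A word x = (a_k)_{k <= m} in W*_b is encoded as the pair (m, a) where
  a :: int => nat gives the letters a k for k <= m; letters beyond the height are
  normalised to 0.\<close>
type_synonym word = "int \<times> (int \<Rightarrow> nat)"

definition words :: "nat \<Rightarrow> word set" where
  "words b = {(m, a). (\<forall>k\<le>m. a k \<in> {1..b}) \<and> (\<forall>k>m. a k = 0)}"

definition height :: "word \<Rightarrow> int" where
  "height x = fst x"

definition parent :: "word \<Rightarrow> word" where
  "parent x = (fst x - 1, (snd x)(fst x := 0))"

definition child :: "word \<Rightarrow> nat \<Rightarrow> word" where
  "child x i = (fst x + 1, (snd x)(fst x + 1 := i))"

definition kernel :: "nat \<Rightarrow> word \<Rightarrow> word \<Rightarrow> real" where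
  "kernel b x y =
     (if y = parent x then 1/2
      else if (\<exists>i\<in>{1..b}. y = child x i) then 1 / (2 * real b)
      else 0)"

definition meet_height :: "word \<Rightarrow> word \<Rightarrow> int" where
  "meet_height x y =
     (GREATEST c. c \<le> fst x \<and> c \<le> fst y \<and> (\<forall>k\<le>c. snd x k = snd y k))"

definition markov_chain :: "'s measure \<Rightarrow> (nat \<Rightarrow> 's \<Rightarrow> word)
     \<Rightarrow> (word \<Rightarrow> word \<Rightarrow> real) \<Rightarrow> word \<Rightarrow> bool" where
  "markov_chain M Y p r \<longleftrightarrow>
     prob_space M \<and>
     (\<forall>n. Y n \<in> measurable M (count_space UNIV)) \<and>
     measure M {\<omega> \<in> space M. Y 0 \<omega> = r} = 1 \<and>
     (\<forall>n (xs :: nat \<Rightarrow> word) y.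
        measure M {\<omega> \<in> space M. (\<forall>i\<le>n. Y i \<omega> = xs i) \<and> Y (Suc n) \<omega> = y}
        = measure M {\<omega> \<in> space M. \<forall>i\<le>n. Y i \<omega> = xs i} * p (xs n) y)"

end

theory Submission
  imports Defs
begin


definition nbrs :: "nat \<Rightarrow> word \<Rightarrow> word set" where
  "nbrs b x = insert (parent x) (child x ` {1..b})"

definition Pk :: "nat \<Rightarrow> (word \<Rightarrow> ennreal) \<Rightarrow> word \<Rightarrow> ennreal" where
  "Pk b g x = (\<Sum>y\<in>nbrs b x. ennreal (kernel b x y) * g y)"

definition Qk :: "nat \<Rightarrow> (nat \<times> nat \<Rightarrow> real) \<Rightarrow> nat \<times> nat \<Rightarrow> real" where
  "Qk b V s = (case s of (p, d) \<Rightarrow>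
     if d > 0 then V (p, d - 1) / 2 + V (p, d + 1) / 2
     else if p = 0 then V (1, 0) / 2 + V (0, 1) / 2
     else V (p + 1, 0) / 2 + V (p - 1, 0) / (2 * real b) + (real b - 1) * V (p, 1) / (2 * real b))"

locale tree =
  fixes b :: nat and root :: word
  assumes b2: "b \<ge> 2" and root_w: "root \<in> words b" and root_h: "height root = 0"
begin

definition R :: "word set" where
  "R = {x \<in> words b. \<exists>K. \<forall>k\<le>K. snd x k = snd root k}"

abbreviation mh :: "word \<Rightarrow> int" where "mh x \<equiv> meet_height root x"

definition phi :: "word \<Rightarrow> nat \<times> nat" where
  "phi x = (nat (- mh x), nat (fst x - mh x))"

lemma fst_root: "fst root = 0" using root_h by (simp add: height_def)

lemma root_letters: "k \<le> 0 \<Longrightarrow> snd root k \<in> {1..b}"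
  using root_w fst_root by (cases root) (auto simp: words_def)

lemma mh_eq:
  assumes "c \<le> 0" "c \<le> fst x" "\<forall>k\<le>c. snd root k = snd x k"
    "\<not> (c + 1 \<le> 0 \<and> c + 1 \<le> fst x \<and> snd root (c + 1) = snd x (c + 1))"
  shows "mh x = c"
  unfolding meet_height_def
proof (rule Greatest_equality)
  show "c \<le> fst root \<and> c \<le> fst x \<and> (\<forall>k\<le>c. snd root k = snd x k)"
    using assms fst_root by simp
next
  fix y assume y: "y \<le> fst root \<and> y \<le> fst x \<and> (\<forall>k\<le>y. snd root k = snd x k)"
  show "y \<le> c"
  proof (rule ccontr)
    assume "\<not> y \<le> c"
    then have "c + 1 \<le> y" by simp
    then show False using y assms(4) fst_root by auto
  qed
qed

lemma mh_ex:
  assumes "x \<in> R"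
  shows "\<exists>c. c \<le> 0 \<and> c \<le> fst x \<and> (\<forall>k\<le>c. snd root k = snd x k) \<and>
    \<not> (c + 1 \<le> 0 \<and> c + 1 \<le> fst x \<and> snd root (c + 1) = snd x (c + 1))"
proof (rule ccontr)
  define P where "P c \<longleftrightarrow> c \<le> 0 \<and> c \<le> fst x \<and> (\<forall>k\<le>c. snd root k = snd x k)" for c
  assume "\<not> ?thesis"
  then have step: "P c \<Longrightarrow> P (c + 1)" for c
    unfolding P_def by (auto simp: le_less int_one_le_iff_zero_less)
  from assms obtain K where K: "\<forall>k\<le>K. snd x k = snd root k" by (auto simp: R_def)
  define K' where "K' = min K (min (fst x) 0)"
  have "P K'" using K unfolding P_def K'_def by auto
  have "P (K' + int n)" for n
  proof (induction n)
    case (Suc n)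
    then have "P (K' + int n + 1)" using step by blast
    then show ?case by (simp add: algebra_simps)
  qed (use \<open>P K'\<close> in simp)
  have "K' \<le> 0" by (simp add: K'_def)
  from this \<open>P (K' + int (nat (1 - K')))\<close> have "P 1"
    by simp
  then show False by (simp add: P_def)
qed

lemma mh_props:
  assumes "x \<in> R"
  shows "mh x \<le> 0" "mh x \<le> fst x" "\<And>k. k \<le> mh x \<Longrightarrow> snd root k = snd x k"
    "\<not> (mh x + 1 \<le> 0 \<and> mh x + 1 \<le> fst x \<and> snd root (mh x + 1) = snd x (mh x + 1))"
proof -
  obtain c where c: "c \<le> 0" "c \<le> fst x" "\<forall>k\<le>c. snd root k = snd x k"
    "\<not> (c + 1 \<le> 0 \<and> c + 1 \<le> fst x \<and> snd root (c + 1) = snd x (c + 1))"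
    using mh_ex[OF assms] by blast
  have "mh x = c" using mh_eq[OF c] .
  then show "mh x \<le> 0" "mh x \<le> fst x" "\<And>k. k \<le> mh x \<Longrightarrow> snd root k = snd x k"
    "\<not> (mh x + 1 \<le> 0 \<and> mh x + 1 \<le> fst x \<and> snd root (mh x + 1) = snd x (mh x + 1))"
    using c by auto
qed


lemma words_above: "x \<in> words b \<Longrightarrow> k > fst x \<Longrightarrow> snd x k = 0"
  by (cases x) (auto simp: words_def)

lemma words_below: "x \<in> words b \<Longrightarrow> k \<le> fst x \<Longrightarrow> snd x k \<in> {1..b}"
  by (cases x) (auto simp: words_def)

lemma root_R: "root \<in> R"
  using root_w by (auto simp: R_def)

lemma parent_R: assumes "x \<in> R" shows "parent x \<in> R"
proof -
  from assms obtain K where K: "\<forall>k\<le>K. snd x k = snd root k" and w: "x \<in> words b"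
    by (auto simp: R_def)
  have "parent x \<in> words b"
    using w by (cases x) (auto simp: words_def parent_def)
  moreover have "\<forall>k\<le>min K (fst x - 1). snd (parent x) k = snd root k"
    using K by (auto simp: parent_def)
  ultimately show ?thesis unfolding R_def by blast
qed

lemma child_R: assumes "x \<in> R" "i \<in> {1..b}" shows "child x i \<in> R"
proof -
  from assms obtain K where K: "\<forall>k\<le>K. snd x k = snd root k" and w: "x \<in> words b"
    by (auto simp: R_def)
  have "child x i \<in> words b"
    using w assms(2) by (cases x) (auto simp: words_def child_def)
  moreover have "\<forall>k\<le>min K (fst x). snd (child x i) k = snd root k"
    using K by (auto simp: child_def)
  ultimately show ?thesis unfolding R_def by blast
qed

lemma mh_root: "mh root = 0"
  by (rule mh_eq) (auto simp: fst_root)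

lemma phi_root: "phi root = (0, 0)"
  by (simp add: phi_def mh_root fst_root)

lemma mh_parent:
  assumes "x \<in> R"
  shows "mh (parent x) = (if mh x < fst x then mh x else fst x - 1)"
proof (cases "mh x < fst x")
  case True
  have "mh (parent x) = mh x"
    by (rule mh_eq) (use mh_props[OF assms] True in \<open>auto simp: parent_def\<close>)
  then show ?thesis using True by simp
next
  case False
  then have e: "mh x = fst x" using mh_props(2)[OF assms] by simp
  have "mh (parent x) = fst x - 1"
    by (rule mh_eq) (use mh_props[OF assms] e in \<open>auto simp: parent_def\<close>)
  then show ?thesis using False by simp
qed

lemma mh_child:
  assumes "x \<in> R" "i \<in> {1..b}"
  shows "mh (child x i) = (if mh x < fst x then mh x
     else if fst x < 0 \<and> i = snd root (fst x + 1) then fst x + 1 else fst x)"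
proof (cases "mh x < fst x")
  case True
  have "mh (child x i) = mh x"
    by (rule mh_eq) (use mh_props[OF assms(1)] True in \<open>auto simp: child_def\<close>)
  then show ?thesis using True by simp
next
  case False
  then have e: "mh x = fst x" using mh_props(2)[OF assms(1)] by simp
  show ?thesis
  proof (cases "fst x < 0 \<and> i = snd root (fst x + 1)")
    case True
    have "mh (child x i) = fst x + 1"
    proof (rule mh_eq)
      show "\<forall>k\<le>fst x + 1. snd root k = snd (child x i) k"
      proof (intro allI impI)
        fix k assume "k \<le> fst x + 1"
        then consider "k \<le> fst x" | "k = fst x + 1" by linarith
        then show "snd root k = snd (child x i) k"
          by cases (use mh_props(3)[OF assms(1)] e True in \<open>auto simp: child_def\<close>)
      qed
    qed (use True in \<open>auto simp: child_def\<close>)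
    then show ?thesis using True False by simp
  next
    case F2: False
    have "mh (child x i) = fst x"
      by (rule mh_eq) (use mh_props[OF assms(1)] e F2 in \<open>auto simp: child_def\<close>)
    then show ?thesis using F2 False by simp
  qed
qed

lemma phi_parent:
  assumes "x \<in> R"
  shows "phi (parent x) = (if snd (phi x) > 0 then (fst (phi x), snd (phi x) - 1) else (fst (phi x) + 1, 0))"
proof -
  have f: "fst (parent x) = fst x - 1" by (simp add: parent_def)
  show ?thesis
    using mh_props[OF assms] unfolding phi_def f mh_parent[OF assms] by auto
qed

lemma phi_child:
  assumes "x \<in> R" "i \<in> {1..b}"
  shows "phi (child x i) = (if snd (phi x) > 0 then (fst (phi x), snd (phi x) + 1)
     else if fst (phi x) > 0 \<and> i = snd root (fst x + 1) then (fst (phi x) - 1, 0) else (fst (phi x), 1))"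
proof -
  have f: "fst (child x i) = fst x + 1" by (simp add: child_def)
  show ?thesis
    using mh_props[OF assms(1)] unfolding phi_def f mh_child[OF assms] by auto
qed


lemma parent_ne_child: "parent x \<noteq> child x i"
  by (simp add: parent_def child_def)

lemma inj_child: "inj_on (child x) {1..b}"
proof (rule inj_onI)
  fix i j assume "child x i = child x j"
  then have "snd (child x i) (fst x + 1) = snd (child x j) (fst x + 1)" by simp
  then show "i = j" by (simp add: child_def)
qed

lemma finite_nbrs: "finite (nbrs b x)"
  by (simp add: nbrs_def)

lemma kernel_parent: "kernel b x (parent x) = 1/2"
  by (simp add: kernel_def)

lemma kernel_child: "i \<in> {1..b} \<Longrightarrow> kernel b x (child x i) = 1 / (2 * real b)"
  using parent_ne_child[of x i, symmetric] by (auto simp: kernel_def)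

lemma sum_nbrs:
  "(\<Sum>y\<in>nbrs b x. F y) = F (parent x) + (\<Sum>i\<in>{1..b}. F (child x i))"
      for F :: "word \<Rightarrow> 'a::comm_monoid_add"
proof -
  have "parent x \<notin> child x ` {1..b}" using parent_ne_child by (metis imageE)
  then have "(\<Sum>y\<in>nbrs b x. F y) = F (parent x) + (\<Sum>y\<in>child x ` {1..b}. F y)"
    by (simp add: nbrs_def)
  also have "(\<Sum>y\<in>child x ` {1..b}. F y) = (\<Sum>i\<in>{1..b}. F (child x i))"
    by (rule sum.reindex[OF inj_child, unfolded comp_def])
  finally show ?thesis .
qed

lemma sum_kernel: "(\<Sum>y\<in>nbrs b x. kernel b x y) = 1"
  using b2 by (simp add: sum_nbrs kernel_parent kernel_child)

lemma kernel_nonneg: "kernel b x y \<ge> 0"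
  by (simp add: kernel_def)

lemma Pk_real:
  assumes "\<And>y. V y \<ge> 0"
  shows "Pk b (\<lambda>y. ennreal (V y)) x = ennreal (V (parent x) / 2 + (\<Sum>i\<in>{1..b}. V (child x i)) / (2 * real b))"
proof -
  have "Pk b (\<lambda>y. ennreal (V y)) x = ennreal (\<Sum>y\<in>nbrs b x. kernel b x y * V y)"
    unfolding Pk_def using assms kernel_nonneg
    by (subst sum_ennreal[symmetric]) (auto simp: ennreal_mult)
  also have "(\<Sum>y\<in>nbrs b x. kernel b x y * V y) = V (parent x) / 2 + (\<Sum>i\<in>{1..b}. V (child x i)) / (2 * real b)"
    by (simp add: sum_nbrs kernel_parent kernel_child sum_divide_distrib)
  finally show ?thesis .
qed

lemma Q_proj:
  assumes "x \<in> R"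
  shows "V (phi (parent x)) / 2 + (\<Sum>i\<in>{1..b}. V (phi (child x i))) / (2 * real b) = Qk b V (phi x)"
proof -
  obtain p d where pd: "phi x = (p, d)" by (cases "phi x")
  have bpos: "real b > 0" using b2 by simp
  show ?thesis
  proof (cases "d > 0")
    case True
    have "(\<Sum>i\<in>{1..b}. V (phi (child x i))) = real b * V (p, d + 1)"
      using phi_child[OF assms] pd True by simp
    then show ?thesis using phi_parent[OF assms] pd True bpos by (simp add: Qk_def)
  next
    case False
    then have d0: "d = 0" by simp
    show ?thesis
    proof (cases "p = 0")
      case True
      have "(\<Sum>i\<in>{1..b}. V (phi (child x i))) = real b * V (0, 1)"
        using phi_child[OF assms] pd True d0 by simp
      then show ?thesis using phi_parent[OF assms] pd True d0 bpos by (simp add: Qk_def)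
    next
      case False
      have e: "mh x = fst x" "mh x < 0" using pd d0 False mh_props[OF assms] by (auto simp: phi_def)
      define i0 where "i0 = snd root (fst x + 1)"
      have i0: "i0 \<in> {1..b}" unfolding i0_def using e by (intro root_letters) simp
      have "(\<Sum>i\<in>{1..b}. V (phi (child x i))) = V (phi (child x i0)) + (\<Sum>i\<in>{1..b} - {i0}. V (phi (child x i)))"
        using i0 by (simp add: sum.remove)
      also have "V (phi (child x i0)) = V (p - 1, 0)"
        using phi_child[OF assms i0] pd d0 False i0_def by simp
      also have "(\<Sum>i\<in>{1..b} - {i0}. V (phi (child x i))) = (\<Sum>i\<in>{1..b} - {i0}. V (p, 1))"
        by (rule sum.cong) (use phi_child[OF assms] pd d0 False i0_def in auto)
      also have "\<dots> = (real b - 1) * V (p, 1)"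
        using i0 b2 by (simp add: of_nat_diff)
      finally show ?thesis using phi_parent[OF assms] pd d0 False bpos
        by (simp add: Qk_def add_divide_distrib)
    qed
  qed
qed

lemma Pk_phi:
  assumes "x \<in> R" "\<And>s. V s \<ge> 0"
  shows "Pk b (\<lambda>y. ennreal (V (phi y))) x = ennreal (Qk b V (phi x))"
  using Pk_real[of "\<lambda>y. V (phi y)" x] assms Q_proj[OF assms(1)] by simp


definition V1 :: "nat \<Rightarrow> nat \<Rightarrow> nat \<times> nat \<Rightarrow> real" where
  "V1 p0 d0 s = (case s of (p, d) \<Rightarrow>
     if p = p0 then 4 + 2 * real (min d d0) else if p < p0 then 4 else 4 / real b ^ (p - p0))"

definition h2 :: "nat \<Rightarrow> nat \<times> nat \<Rightarrow> real" where
  "h2 p0 s = (case s of (p, d) \<Rightarrow>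
     if p = p0 then 1 + real d / 2 else if p < p0 then 1 else 1 / real b ^ (p - p0))"

lemma V1_nonneg: "V1 p0 d0 s \<ge> 0"
  by (auto simp: V1_def split: prod.splits)

lemma h2_nonneg: "h2 p0 s \<ge> 0"
  by (auto simp: h2_def split: prod.splits)

lemma pow_shift: "p > p0 \<Longrightarrow> real b ^ (Suc p - p0) = real b * real b ^ (p - p0)"
  by (simp add: Suc_diff_le)

lemma pow_shift2: "p > Suc p0 \<Longrightarrow> real b ^ (p - p0) = real b * real b ^ (p - 1 - p0)"
  by (metis Suc_diff_Suc diff_Suc_eq_diff_pred power_Suc Suc_lessD)

lemma V1_ok: "Qk b (V1 p0 d0) s + (if s = (p0, d0) then 1 else 0) \<le> V1 p0 d0 s"
proof -
  obtain p d where s: "s = (p, d)" by (cases s)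
  have b: "real b \<ge> 2" using b2 by simp
  show ?thesis
  proof (cases "d > 0")
    case True
    show ?thesis
    proof (cases "p = p0")
      case True
      consider "d < d0" | "d = d0" | "d > d0" by linarith
      then show ?thesis
        by cases (use True \<open>d > 0\<close> s in \<open>auto simp: Qk_def V1_def min_def of_nat_diff field_simps\<close>)
    next
      case False
      then show ?thesis using s True by (auto simp: Qk_def V1_def)
    qed
  next
    case False
    then have d0: "d = 0" by simp
    consider "p = 0" | "p > 0" "p = p0" | "p > 0" "p < p0" | "p > 0" "p > p0" by linarith
    then show ?thesis
    proof cases
      case 1
      then show ?thesis using s d0 b
        by (cases "p0 = 0"; cases "d0 = 0") (auto simp: Qk_def V1_def field_simps)
    next
      case 2
      then show ?thesis using s d0 b
        by (cases "d0 = 0") (auto simp: Qk_def V1_def field_simps)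
    next
      case 3
      then show ?thesis using s d0 b
        by (auto simp: Qk_def V1_def field_simps)
    next
      case 4
      show ?thesis
      proof (cases "p = Suc p0")
        case True
        then show ?thesis using s d0 b 4
          by (auto simp: Qk_def V1_def field_simps power2_eq_square)
      next
        case False
        then have "p > Suc p0" using 4 by simp
        then show ?thesis using s d0 b 4 pow_shift[of p0 p] pow_shift2[of p0 p]
          by (auto simp: Qk_def V1_def field_simps)
      qed
    qed
  qed
qed


lemma h2_ok:
  assumes "\<not> (fst s = p0 \<and> snd s \<ge> dd)" "dd \<ge> 1"
  shows "Qk b (h2 p0) s \<le> h2 p0 s"
proof -
  obtain p d where s: "s = (p, d)" by (cases s)
  have b: "real b \<ge> 2" using b2 by simp
  show ?thesis
  proof (cases "d > 0")
    case True
    then show ?thesis using s by (auto simp: Qk_def h2_def field_simps of_nat_diff)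
  next
    case False
    then have d0: "d = 0" by simp
    consider "p = 0" | "p > 0" "p = p0" | "p > 0" "p < p0" | "p > 0" "p > p0" by linarith
    then show ?thesis
    proof cases
      case 1
      then show ?thesis using s d0 b
        by (cases "p0 = 0") (auto simp: Qk_def h2_def field_simps)
    next
      case 2
      then show ?thesis using s d0 b
        by (auto simp: Qk_def h2_def field_simps)
    next
      case 3
      then show ?thesis using s d0 b
        by (auto simp: Qk_def h2_def field_simps)
    next
      case 4
      show ?thesis
      proof (cases "p = Suc p0")
        case True
        then show ?thesis using s d0 b 4
          by (auto simp: Qk_def h2_def field_simps power2_eq_square)
      next
        case False
        then have "p > Suc p0" using 4 by simp
        then show ?thesis using s d0 b 4 pow_shift[of p0 p] pow_shift2[of p0 p]
          by (auto simp: Qk_def h2_def field_simps)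
      qed
    qed
  qed
qed


definition valid :: "nat \<Rightarrow> (nat \<Rightarrow> word) set" where
  "valid N = {xs. xs 0 = root \<and> (\<forall>i<N. xs (Suc i) \<in> nbrs b (xs i)) \<and> (\<forall>i>N. xs i = root)}"

lemma nbrs_R: "x \<in> R \<Longrightarrow> y \<in> nbrs b x \<Longrightarrow> y \<in> R"
  unfolding nbrs_def using parent_R[of x] child_R[of x] by blast

lemma valid_R: "xs \<in> valid N \<Longrightarrow> xs i \<in> R"
proof (induction i)
  case 0 then show ?case using root_R by (simp add: valid_def)
next
  case (Suc i)
  then show ?case using root_R nbrs_R by (cases "i < N") (auto simp: valid_def)
qed

lemma valid0: "valid 0 = {\<lambda>_. root}"
proof -
  have "xs \<in> valid 0 \<Longrightarrow> xs = (\<lambda>_. root)" for xs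
  proof (rule ext)
    fix i assume "xs \<in> valid 0"
    then show "xs i = root" by (cases i) (auto simp: valid_def)
  qed
  then show ?thesis by (auto simp: valid_def)
qed

lemma valid_Suc: "valid (Suc N) \<subseteq> (\<lambda>(xs, y). xs(Suc N := y)) ` (SIGMA xs:valid N. nbrs b (xs N))"
proof
  fix zs assume zs: "zs \<in> valid (Suc N)"
  define xs where "xs = zs(Suc N := root)"
  have "xs \<in> valid N" using zs by (auto simp: valid_def xs_def)
  moreover have "zs (Suc N) \<in> nbrs b (xs N)" using zs by (auto simp: valid_def xs_def)
  moreover have "zs = xs(Suc N := zs (Suc N))" by (auto simp: xs_def)
  ultimately show "zs \<in> (\<lambda>(xs, y). xs(Suc N := y)) ` (SIGMA xs:valid N. nbrs b (xs N))"
    by (intro image_eqI[of _ _ "(xs, zs (Suc N))"]) auto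
qed

lemma finite_valid: "finite (valid N)"
proof (induction N)
  case 0 then show ?case by (simp add: valid0)
next
  case (Suc N)
  then show ?case
    by (rule finite_subset[OF valid_Suc finite_imageI[OF finite_SigmaI]]) (auto simp: finite_nbrs)
qed

end

locale mc = tree +
  fixes M :: "'s measure" and Y :: "nat \<Rightarrow> 's \<Rightarrow> word"
  assumes mc: "markov_chain M Y (kernel b) root"
begin

sublocale prob_space M using mc by (simp add: markov_chain_def)

lemma Y_meas[measurable]: "Y n \<in> measurable M (count_space UNIV)"
  using mc by (simp add: markov_chain_def)

lemma Y0: "prob {\<omega>\<in>space M. Y 0 \<omega> = root} = 1"
  using mc by (simp add: markov_chain_def)

lemma fdd: "prob {\<omega>\<in>space M. (\<forall>i\<le>n. Y i \<omega> = xs i) \<and> Y (Suc n) \<omega> = y}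
        = prob {\<omega>\<in>space M. \<forall>i\<le>n. Y i \<omega> = xs i} * kernel b (xs n) y"
  using mc unfolding markov_chain_def by blast

lemma fun_Y_meas: "(\<lambda>\<omega>. g (Y n \<omega>)) \<in> measurable M (count_space UNIV)"
  by (rule measurable_compose[OF Y_meas]) simp

lemma fun_Y_borel[measurable]: "(\<lambda>\<omega>. g (Y n \<omega>)) \<in> borel_measurable M"
  by (rule measurable_compose[OF Y_meas]) simp

lemma sets_Y: "{\<omega>\<in>space M. P (Y n \<omega>)} \<in> sets M"
proof -
  have "{\<omega>\<in>space M. P (Y n \<omega>)} = (\<lambda>\<omega>. P (Y n \<omega>)) -` {True} \<inter> space M" by auto
  also have "\<dots> \<in> sets M" by (rule measurable_sets[OF fun_Y_meas]) auto
  finally show ?thesis .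
qed

definition Ev :: "(nat \<Rightarrow> word) \<Rightarrow> nat \<Rightarrow> 's set" where
  "Ev xs N = {\<omega>\<in>space M. \<forall>i\<le>N. Y i \<omega> = xs i}"

definition pth :: "nat \<Rightarrow> 's \<Rightarrow> nat \<Rightarrow> word" where
  "pth N \<omega> = (\<lambda>i. if i \<le> N then Y i \<omega> else root)"

lemma sets_fin_all2: "{\<omega>\<in>space M. \<forall>i<N. P i (Y i \<omega>)} \<in> sets M"
proof (induction N)
  case 0
  have "{\<omega>\<in>space M. \<forall>i<(0::nat). P i (Y i \<omega>)} = space M" by blast
  then show ?case by (metis sets.top)
next
  case (Suc N)
  have eq: "{\<omega>\<in>space M. \<forall>i<Suc N. P i (Y i \<omega>)} =
      {\<omega>\<in>space M. \<forall>i<N. P i (Y i \<omega>)} \<inter> {\<omega>\<in>space M. P N (Y N \<omega>)}"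
    unfolding less_Suc_eq by blast
  show ?case unfolding eq by (rule sets.Int[OF Suc.IH sets_Y])
qed

lemma sets_fin_all: "{\<omega>\<in>space M. \<forall>i\<le>N. P i (Y i \<omega>)} \<in> sets M"
  using sets_fin_all2[of "Suc N" P] unfolding less_Suc_eq_le .

lemma E_sets: "Ev xs N \<in> sets M"
  unfolding Ev_def by (rule sets_fin_all[of N "\<lambda>i y. y = xs i"])

lemma E_iff:
  assumes "xs \<in> valid N"
  shows "\<omega> \<in> Ev xs N \<longleftrightarrow> \<omega> \<in> space M \<and> pth N \<omega> = xs"
proof
  assume a: "\<omega> \<in> Ev xs N"
  have "pth N \<omega> = xs"
  proof
    fix i show "pth N \<omega> i = xs i"
      using a assms by (cases "i \<le> N") (auto simp: Ev_def pth_def valid_def)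
  qed
  then show "\<omega> \<in> space M \<and> pth N \<omega> = xs" using a by (simp add: Ev_def)
next
  assume "\<omega> \<in> space M \<and> pth N \<omega> = xs"
  then show "\<omega> \<in> Ev xs N" by (auto simp: Ev_def pth_def)
qed

lemma E_disj: "xs \<in> valid N \<Longrightarrow> xs' \<in> valid N \<Longrightarrow> xs \<noteq> xs' \<Longrightarrow> Ev xs N \<inter> Ev xs' N = {}"
  by (auto simp: E_iff)

definition F :: "(nat \<Rightarrow> word) \<Rightarrow> nat \<Rightarrow> word \<Rightarrow> 's set" where
  "F xs N y = {\<omega>\<in>space M. (\<forall>i\<le>N. Y i \<omega> = xs i) \<and> Y (Suc N) \<omega> = y}"

lemma F_eq: "F xs N y = Ev xs N \<inter> {\<omega>\<in>space M. Y (Suc N) \<omega> = y}"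
  by (auto simp: F_def Ev_def)

lemma F_sets: "F xs N y \<in> sets M"
  unfolding F_eq by (rule sets.Int[OF E_sets sets_Y])

lemma prob_F: "prob (F xs N y) = prob (Ev xs N) * kernel b (xs N) y"
  unfolding F_def Ev_def by (rule fdd)

lemma F_disj:
  assumes "(xs, y) \<in> (SIGMA xs:valid N. nbrs b (xs N))" "(xs', y') \<in> (SIGMA xs:valid N. nbrs b (xs N))"
    "(xs, y) \<noteq> (xs', y')"
  shows "F xs N y \<inter> F xs' N y' = {}"
proof (cases "xs = xs'")
  case True
  then have "y \<noteq> y'" using assms by simp
  then show ?thesis by (auto simp: F_def)
next
  case False
  then have "Ev xs N \<inter> Ev xs' N = {}" using assms by (intro E_disj) auto
  then show ?thesis by (auto simp: F_eq)
qed

definition U :: "nat \<Rightarrow> 's set" where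
  "U N = {\<omega>\<in>space M. pth N \<omega> \<in> valid N}"

lemma U_eq: "U N = (\<Union>xs\<in>valid N. Ev xs N)"
  by (auto simp: U_def E_iff)

lemma U_sets: "U N \<in> sets M"
  unfolding U_eq by (rule sets.finite_UN[OF finite_valid E_sets])

lemma prob_U_sum: "prob (U N) = (\<Sum>xs\<in>valid N. prob (Ev xs N))"
  unfolding U_eq
  by (rule finite_measure_finite_Union[OF finite_valid]) (auto simp: E_sets disjoint_family_on_def E_disj)

lemma F_sub_U: "(\<Union>(xs, y)\<in>(SIGMA xs:valid N. nbrs b (xs N)). F xs N y) \<subseteq> U (Suc N)"
proof
  fix \<omega> assume "\<omega> \<in> (\<Union>(xs, y)\<in>(SIGMA xs:valid N. nbrs b (xs N)). F xs N y)"
  then obtain xs y where xs: "xs \<in> valid N" "y \<in> nbrs b (xs N)" and w: "\<omega> \<in> F xs N y" by auto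
  have "pth (Suc N) \<omega> = xs(Suc N := y)"
  proof
    fix i show "pth (Suc N) \<omega> i = (xs(Suc N := y)) i"
      using w xs(1) by (cases "i \<le> N"; cases "i = Suc N") (auto simp: F_def pth_def valid_def)
  qed
  moreover have "xs(Suc N := y) \<in> valid (Suc N)"
    using xs unfolding valid_def by (auto simp: less_Suc_eq)
  ultimately show "\<omega> \<in> U (Suc N)" using w by (simp add: U_def F_def)
qed

lemma prob_U: "prob (U N) = 1"
proof (induction N)
  case 0
  have "U 0 = {\<omega>\<in>space M. Y 0 \<omega> = root}"
    by (auto simp: U_def valid0 pth_def fun_eq_iff)
  then show ?case using Y0 by simp
next
  case (Suc N)
  let ?S = "SIGMA xs:valid N. nbrs b (xs N)"
  have fin: "finite ?S" using finite_valid finite_nbrs by blast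
  have "prob (\<Union>(xs, y)\<in>?S. F xs N y) = (\<Sum>(xs, y)\<in>?S. prob (F xs N y))"
  proof -
    have "prob (\<Union>p\<in>?S. (\<lambda>(xs, y). F xs N y) p) = (\<Sum>p\<in>?S. prob ((\<lambda>(xs, y). F xs N y) p))"
    proof (rule finite_measure_finite_Union[OF fin])
      show "(\<lambda>(xs, y). F xs N y) ` ?S \<subseteq> sets M" using F_sets by auto
      show "disjoint_family_on (\<lambda>(xs, y). F xs N y) ?S"
        unfolding disjoint_family_on_def using F_disj by fast
    qed
    then show ?thesis by (simp add: case_prod_unfold)
  qed
  also have "\<dots> = (\<Sum>xs\<in>valid N. \<Sum>y\<in>nbrs b (xs N). prob (Ev xs N) * kernel b (xs N) y)"
    by (subst sum.Sigma[symmetric]) (auto simp: finite_valid finite_nbrs prob_F)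
  also have "\<dots> = (\<Sum>xs\<in>valid N. prob (Ev xs N))"
    by (simp add: sum_distrib_left[symmetric] sum_kernel)
  also have "\<dots> = 1" using Suc prob_U_sum by simp
  finally have "prob (\<Union>(xs, y)\<in>?S. F xs N y) = 1" .
  moreover have "prob (\<Union>(xs, y)\<in>?S. F xs N y) \<le> prob (U (Suc N))"
    by (rule finite_measure_mono[OF F_sub_U U_sets])
  ultimately show ?case using prob_le_1[of "U (Suc N)"] by linarith
qed

lemma ae_valid: "AE \<omega> in M. pth N \<omega> \<in> valid N"
proof -
  have "AE \<omega> in M. \<omega> \<in> U N" by (rule AE_prob_1[OF prob_U])
  then show ?thesis by (rule AE_mp) (auto simp: U_def)
qed

lemma ae_R: "AE \<omega> in M. \<forall>n. Y n \<omega> \<in> R"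
proof -
  have "AE \<omega> in M. \<forall>N. pth N \<omega> \<in> valid N" by (simp add: AE_all_countable ae_valid)
  then show ?thesis
  proof (rule AE_mp, intro AE_I2 impI allI)
    fix \<omega> n assume "\<forall>N. pth N \<omega> \<in> valid N"
    then have "pth n \<omega> n \<in> R" using valid_R by blast
    then show "Y n \<omega> \<in> R" by (simp add: pth_def)
  qed
qed

lemma ae_Y0: "AE \<omega> in M. Y 0 \<omega> = root"
  using AE_prob_1[OF Y0] by (rule AE_mp) auto

lemma ind_F:
  assumes "\<omega> \<in> space M" "xs \<in> valid N"
  shows "indicator (F xs N y) \<omega> = (if pth N \<omega> = xs \<and> Y (Suc N) \<omega> = y then 1 else (0::ennreal))"
  using assms by (auto simp: F_eq E_iff indicator_def)

lemma ind_E: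
  assumes "\<omega> \<in> space M" "xs \<in> valid N"
  shows "indicator (Ev xs N) \<omega> = (if pth N \<omega> = xs then 1 else (0::ennreal))"
  using assms by (auto simp: E_iff indicator_def)

lemma meas_ci: "G \<in> sets M \<Longrightarrow> (\<lambda>\<omega>. c * indicator G \<omega> :: ennreal) \<in> borel_measurable M"
  by (rule borel_measurable_times_ennreal[OF measurable_const borel_measurable_indicator]) simp_all

lemma meas_sum_ci: "(\<And>y. y \<in> S \<Longrightarrow> G y \<in> sets M) \<Longrightarrow>
   (\<lambda>\<omega>. \<Sum>y\<in>S. c y * indicator (G y) \<omega> :: ennreal) \<in> borel_measurable M"
  by (rule borel_measurable_sum) (rule meas_ci)

lemma int_sum_ci: "finite S \<Longrightarrow> (\<And>y. y \<in> S \<Longrightarrow> G y \<in> sets M) \<Longrightarrow>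
   (\<integral>\<^sup>+\<omega>. (\<Sum>y\<in>S. c y * indicator (G y) \<omega> :: ennreal) \<partial>M) = (\<Sum>y\<in>S. c y * emeasure M (G y))"
proof -
  assume G: "\<And>y. y \<in> S \<Longrightarrow> G y \<in> sets M"
  have "(\<integral>\<^sup>+\<omega>. (\<Sum>y\<in>S. c y * indicator (G y) \<omega> :: ennreal) \<partial>M) = (\<Sum>y\<in>S. \<integral>\<^sup>+\<omega>. c y * indicator (G y) \<omega> \<partial>M)"
    by (rule nn_integral_sum) (rule meas_ci[OF G])
  also have "\<dots> = (\<Sum>y\<in>S. c y * emeasure M (G y))"
    by (rule sum.cong[OF refl]) (rule nn_integral_cmult_indicator[OF G])
  finally show ?thesis .
qed

lemma sum_single: "finite S \<Longrightarrow> a \<in> S \<Longrightarrow> (\<And>x. x \<in> S \<Longrightarrow> x \<noteq> a \<Longrightarrow> f x = 0) \<Longrightarrow> sum f S = f a"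
  by (simp add: sum.remove sum.neutral)

lemma nbrs_step: "pth (Suc N) \<omega> \<in> valid (Suc N) \<Longrightarrow> Y (Suc N) \<omega> \<in> nbrs b (Y N \<omega>)"
  unfolding valid_def pth_def by auto

lemma MP:
  assumes A: "A \<in> sets M"
    and det: "\<And>\<omega> \<omega>'. \<omega> \<in> space M \<Longrightarrow> \<omega>' \<in> space M \<Longrightarrow> pth N \<omega> = pth N \<omega>' \<Longrightarrow> \<omega> \<in> A \<Longrightarrow> \<omega>' \<in> A"
  shows "(\<integral>\<^sup>+\<omega>. g (Y (Suc N) \<omega>) * indicator A \<omega> \<partial>M) = (\<integral>\<^sup>+\<omega>. Pk b g (Y N \<omega>) * indicator A \<omega> \<partial>M)"
proof -
  define VA where "VA = {xs\<in>valid N. Ev xs N \<subseteq> A}"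
  have finVA: "finite VA" using finite_valid by (simp add: VA_def)
  have VA_valid: "xs \<in> VA \<Longrightarrow> xs \<in> valid N" for xs by (simp add: VA_def)
  have inVA: "pth N \<omega> \<in> VA" if "\<omega> \<in> space M" "\<omega> \<in> A" "pth N \<omega> \<in> valid N" for \<omega>
  proof -
    have "Ev (pth N \<omega>) N \<subseteq> A"
    proof
      fix \<omega>' assume "\<omega>' \<in> Ev (pth N \<omega>) N"
      then have "\<omega>' \<in> space M" "pth N \<omega>' = pth N \<omega>" using E_iff[OF that(3)] by auto
      then show "\<omega>' \<in> A" using det[of \<omega> \<omega>'] that by simp
    qed
    then show ?thesis using that by (simp add: VA_def)
  qed
  have notA: "pth N \<omega> \<notin> VA" if "\<omega> \<in> space M" "\<omega> \<notin> A" for \<omega>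
  proof
    assume "pth N \<omega> \<in> VA"
    then have "\<omega> \<in> Ev (pth N \<omega>) N" using E_iff[of "pth N \<omega>" N \<omega>] that by (simp add: VA_def)
    then show False using \<open>pth N \<omega> \<in> VA\<close> that by (auto simp: VA_def)
  qed
  have AE1: "AE \<omega> in M. g (Y (Suc N) \<omega>) * indicator A \<omega> =
      (\<Sum>xs\<in>VA. \<Sum>y\<in>nbrs b (xs N). g y * indicator (F xs N y) \<omega>)"
    using ae_valid[of N] ae_valid[of "Suc N"] AE_space
  proof (eventually_elim)
    case (elim \<omega>)
    have nb: "Y (Suc N) \<omega> \<in> nbrs b (Y N \<omega>)" by (rule nbrs_step[OF elim(2)])
    show ?case
    proof (cases "\<omega> \<in> A")
      case True
      have "(\<Sum>xs\<in>VA. \<Sum>y\<in>nbrs b (xs N). g y * indicator (F xs N y) \<omega>) =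
          (\<Sum>y\<in>nbrs b (pth N \<omega> N). g y * indicator (F (pth N \<omega>) N y) \<omega>)"
      proof (rule sum_single[OF finVA inVA[OF elim(3) True elim(1)]])
        fix xs assume "xs \<in> VA" "xs \<noteq> pth N \<omega>"
        then show "(\<Sum>y\<in>nbrs b (xs N). g y * indicator (F xs N y) \<omega>) = 0"
          using ind_F[OF elim(3) VA_valid] by simp
      qed
      also have "\<dots> = g (Y (Suc N) \<omega>) * indicator (F (pth N \<omega>) N (Y (Suc N) \<omega>)) \<omega>"
      proof (rule sum_single)
        show "finite (nbrs b (pth N \<omega> N))" by (rule finite_nbrs)
        show "Y (Suc N) \<omega> \<in> nbrs b (pth N \<omega> N)" using nb by (simp add: pth_def)
        fix y assume "y \<in> nbrs b (pth N \<omega> N)" "y \<noteq> Y (Suc N) \<omega>"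
        then show "g y * indicator (F (pth N \<omega>) N y) \<omega> = 0"
          using ind_F[OF elim(3) elim(1)] by simp
      qed
      also have "\<dots> = g (Y (Suc N) \<omega>)" using ind_F[OF elim(3) elim(1)] by simp
      finally show ?thesis using True by simp
    next
      case False
      have "(\<Sum>xs\<in>VA. \<Sum>y\<in>nbrs b (xs N). g y * indicator (F xs N y) \<omega>) = 0"
      proof (intro sum.neutral ballI)
        fix xs y assume xs: "xs \<in> VA" and "y \<in> nbrs b (xs N)"
        have "xs \<noteq> pth N \<omega>" using notA[OF elim(3) False] xs by auto
        then show "g y * indicator (F xs N y) \<omega> = 0"
          using ind_F[OF elim(3) VA_valid[OF xs]] by simp
      qed
      then show ?thesis using False by simp
    qed
  qed
  have AE2: "AE \<omega> in M. Pk b g (Y N \<omega>) * indicator A \<omega> =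
      (\<Sum>xs\<in>VA. Pk b g (xs N) * indicator (Ev xs N) \<omega>)"
    using ae_valid[of N] AE_space
  proof (eventually_elim)
    case (elim \<omega>)
    show ?case
    proof (cases "\<omega> \<in> A")
      case True
      have "(\<Sum>xs\<in>VA. Pk b g (xs N) * indicator (Ev xs N) \<omega>) = Pk b g (pth N \<omega> N) * indicator (Ev (pth N \<omega>) N) \<omega>"
      proof (rule sum_single[OF finVA inVA[OF elim(2) True elim(1)]])
        fix xs assume "xs \<in> VA" "xs \<noteq> pth N \<omega>"
        then show "Pk b g (xs N) * indicator (Ev xs N) \<omega> = 0"
          using ind_E[OF elim(2) VA_valid] by simp
      qed
      also have "\<dots> = Pk b g (Y N \<omega>)" using ind_E[OF elim(2) elim(1)] by (simp add: pth_def)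
      finally show ?thesis using True by simp
    next
      case False
      have "(\<Sum>xs\<in>VA. Pk b g (xs N) * indicator (Ev xs N) \<omega>) = 0"
      proof (intro sum.neutral ballI)
        fix xs assume xs: "xs \<in> VA"
        have "xs \<noteq> pth N \<omega>" using notA[OF elim(2) False] xs by auto
        then show "Pk b g (xs N) * indicator (Ev xs N) \<omega> = 0"
          using ind_E[OF elim(2) VA_valid[OF xs]] by simp
      qed
      then show ?thesis using False by simp
    qed
  qed
  have "(\<integral>\<^sup>+\<omega>. g (Y (Suc N) \<omega>) * indicator A \<omega> \<partial>M) =
      (\<integral>\<^sup>+\<omega>. (\<Sum>xs\<in>VA. \<Sum>y\<in>nbrs b (xs N). g y * indicator (F xs N y) \<omega>) \<partial>M)"
    by (rule nn_integral_cong_AE[OF AE1])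
  also have "\<dots> = (\<Sum>xs\<in>VA. \<integral>\<^sup>+\<omega>. (\<Sum>y\<in>nbrs b (xs N). g y * indicator (F xs N y) \<omega>) \<partial>M)"
    by (rule nn_integral_sum) (rule meas_sum_ci[OF F_sets])
  also have "\<dots> = (\<Sum>xs\<in>VA. \<Sum>y\<in>nbrs b (xs N). g y * emeasure M (F xs N y))"
    by (rule sum.cong[OF refl]) (rule int_sum_ci[OF finite_nbrs F_sets])
  also have "\<dots> = (\<Sum>xs\<in>VA. Pk b g (xs N) * emeasure M (Ev xs N))"
  proof (rule sum.cong[OF refl])
    fix xs assume "xs \<in> VA"
    have "(\<Sum>y\<in>nbrs b (xs N). g y * emeasure M (F xs N y)) =
        (\<Sum>y\<in>nbrs b (xs N). ennreal (kernel b (xs N) y) * g y * emeasure M (Ev xs N))"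
    proof (rule sum.cong[OF refl])
      fix y
      have "emeasure M (F xs N y) = ennreal (prob (Ev xs N)) * ennreal (kernel b (xs N) y)"
        by (simp add: emeasure_eq_measure prob_F ennreal_mult kernel_nonneg)
      then show "g y * emeasure M (F xs N y) = ennreal (kernel b (xs N) y) * g y * emeasure M (Ev xs N)"
        by (simp add: emeasure_eq_measure mult_ac)
    qed
    also have "\<dots> = Pk b g (xs N) * emeasure M (Ev xs N)"
      by (simp add: Pk_def sum_distrib_right)
    finally show "(\<Sum>y\<in>nbrs b (xs N). g y * emeasure M (F xs N y)) = Pk b g (xs N) * emeasure M (Ev xs N)" .
  qed
  also have "\<dots> = (\<integral>\<^sup>+\<omega>. (\<Sum>xs\<in>VA. Pk b g (xs N) * indicator (Ev xs N) \<omega>) \<partial>M)"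
    by (rule int_sum_ci[OF finVA E_sets, symmetric])
  also have "\<dots> = (\<integral>\<^sup>+\<omega>. Pk b g (Y N \<omega>) * indicator A \<omega> \<partial>M)"
    by (rule nn_integral_cong_AE[OF AE2, symmetric])
  finally show ?thesis .
qed

lemma int_Y0: "(\<integral>\<^sup>+\<omega>. g (Y 0 \<omega>) \<partial>M) = g root"
proof -
  have "(\<integral>\<^sup>+\<omega>. g (Y 0 \<omega>) \<partial>M) = (\<integral>\<^sup>+\<omega>. g root \<partial>M)"
    by (rule nn_integral_cong_AE) (use ae_Y0 in \<open>rule AE_mp\<close>, simp)
  also have "\<dots> = g root" by (simp add: emeasure_space_1)
  finally show ?thesis .
qed

lemma MP_all: "(\<integral>\<^sup>+\<omega>. g (Y (Suc N) \<omega>) \<partial>M) = (\<integral>\<^sup>+\<omega>. Pk b g (Y N \<omega>) \<partial>M)"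
proof -
  have "(\<integral>\<^sup>+\<omega>. g (Y (Suc N) \<omega>) \<partial>M) = (\<integral>\<^sup>+\<omega>. g (Y (Suc N) \<omega>) * indicator (space M) \<omega> \<partial>M)"
    by (rule nn_integral_cong) simp
  also have "\<dots> = (\<integral>\<^sup>+\<omega>. Pk b g (Y N \<omega>) * indicator (space M) \<omega> \<partial>M)"
    by (rule MP) auto
  also have "\<dots> = (\<integral>\<^sup>+\<omega>. Pk b g (Y N \<omega>) \<partial>M)"
    by (rule nn_integral_cong) simp
  finally show ?thesis .
qed

lemma visits:
  assumes V: "\<And>x. x \<in> R \<Longrightarrow> Pk b V x + w x \<le> V x"
  shows "(\<integral>\<^sup>+\<omega>. (\<Sum>n. w (Y n \<omega>)) \<partial>M) \<le> V root"
proof -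
  have step: "(\<integral>\<^sup>+\<omega>. V (Y N \<omega>) \<partial>M) + (\<Sum>n<N. \<integral>\<^sup>+\<omega>. w (Y n \<omega>) \<partial>M) \<le> V root" for N
  proof (induction N)
    case 0 then show ?case by (simp add: int_Y0)
  next
    case (Suc N)
    have "(\<integral>\<^sup>+\<omega>. V (Y (Suc N) \<omega>) \<partial>M) + (\<integral>\<^sup>+\<omega>. w (Y N \<omega>) \<partial>M)
        = (\<integral>\<^sup>+\<omega>. Pk b V (Y N \<omega>) \<partial>M) + (\<integral>\<^sup>+\<omega>. w (Y N \<omega>) \<partial>M)"
      by (simp only: MP_all)
    also have "\<dots> = (\<integral>\<^sup>+\<omega>. Pk b V (Y N \<omega>) + w (Y N \<omega>) \<partial>M)"
      by (rule nn_integral_add[symmetric]) (rule fun_Y_borel)+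
    also have "\<dots> \<le> (\<integral>\<^sup>+\<omega>. V (Y N \<omega>) \<partial>M)"
      by (rule nn_integral_mono_AE) (use ae_R in \<open>rule AE_mp\<close>, use V in auto)
    finally have "(\<integral>\<^sup>+\<omega>. V (Y (Suc N) \<omega>) \<partial>M) + (\<integral>\<^sup>+\<omega>. w (Y N \<omega>) \<partial>M) \<le> (\<integral>\<^sup>+\<omega>. V (Y N \<omega>) \<partial>M)" .
    then have "(\<integral>\<^sup>+\<omega>. V (Y (Suc N) \<omega>) \<partial>M) + (\<Sum>n<Suc N. \<integral>\<^sup>+\<omega>. w (Y n \<omega>) \<partial>M)
        \<le> (\<integral>\<^sup>+\<omega>. V (Y N \<omega>) \<partial>M) + (\<Sum>n<N. \<integral>\<^sup>+\<omega>. w (Y n \<omega>) \<partial>M)"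
      by (simp add: add.assoc[symmetric] add_right_mono)
    then show ?case using Suc by (rule order_trans)
  qed
  have "(\<integral>\<^sup>+\<omega>. (\<Sum>n. w (Y n \<omega>)) \<partial>M) = (\<Sum>n. \<integral>\<^sup>+\<omega>. w (Y n \<omega>) \<partial>M)"
    by (rule nn_integral_suminf) (rule fun_Y_borel)
  also have "\<dots> \<le> V root"
  proof (rule suminf_le_const[OF summableI])
    fix N
    have "(\<Sum>n<N. \<integral>\<^sup>+\<omega>. w (Y n \<omega>) \<partial>M) \<le> (\<integral>\<^sup>+\<omega>. V (Y N \<omega>) \<partial>M) + (\<Sum>n<N. \<integral>\<^sup>+\<omega>. w (Y n \<omega>) \<partial>M)"
      by simp
    then show "(\<Sum>n<N. \<integral>\<^sup>+\<omega>. w (Y n \<omega>) \<partial>M) \<le> V root" using step[of N] by (rule order_trans)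
  qed
  finally show ?thesis .
qed

lemma hitting:
  assumes hB: "\<And>x. x \<in> R \<Longrightarrow> x \<notin> B \<Longrightarrow> Pk b h x \<le> h x"
    and h1: "\<And>x. x \<in> R \<Longrightarrow> x \<in> B \<Longrightarrow> 1 \<le> h x"
  shows "emeasure M {\<omega>\<in>space M. \<exists>n. Y n \<omega> \<in> B} \<le> h root"
proof -
  define Hs where "Hs N = {\<omega>\<in>space M. \<exists>n<N. Y n \<omega> \<in> B}" for N
  define As where "As N = {\<omega>\<in>space M. \<forall>n<N. Y n \<omega> \<notin> B}" for N
  have As_sets: "As N \<in> sets M" for N
    unfolding As_def by (rule sets_fin_all2[of N "\<lambda>i y. y \<notin> B"])
  have Hs_eq: "Hs N = space M - As N" for N by (auto simp: Hs_def As_def)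
  have Hs_sets: "Hs N \<in> sets M" for N
    unfolding Hs_eq by (rule sets.compl_sets[OF As_sets])
  define G where "G N \<omega> = indicator (Hs N) \<omega> + h (Y N \<omega>) * indicator (As N) \<omega>" for N \<omega>
  have mG2: "(\<lambda>\<omega>. g (Y N \<omega>) * indicator (As M') \<omega>) \<in> borel_measurable M" for g :: "word \<Rightarrow> ennreal" and N M'
    by (rule borel_measurable_times_ennreal[OF fun_Y_borel borel_measurable_indicator[OF As_sets]])
  have intG: "integral\<^sup>N M (G N) = emeasure M (Hs N) + (\<integral>\<^sup>+\<omega>. h (Y N \<omega>) * indicator (As N) \<omega> \<partial>M)" for N
    unfolding G_def
    by (subst nn_integral_add) (auto intro: borel_measurable_indicator[OF Hs_sets] mG2 simp: Hs_sets)
  have G0: "integral\<^sup>N M (G 0) = h root"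
  proof -
    have "Hs 0 = {}" by (simp add: Hs_def)
    moreover have "(\<integral>\<^sup>+\<omega>. h (Y 0 \<omega>) * indicator (As 0) \<omega> \<partial>M) = (\<integral>\<^sup>+\<omega>. h (Y 0 \<omega>) \<partial>M)"
      by (rule nn_integral_cong) (simp add: As_def)
    ultimately show ?thesis by (simp add: intG int_Y0)
  qed
  have Gstep: "integral\<^sup>N M (G (Suc N)) \<le> integral\<^sup>N M (G N)" for N
  proof -
    have "integral\<^sup>N M (G (Suc N)) = emeasure M (Hs (Suc N)) + (\<integral>\<^sup>+\<omega>. h (Y (Suc N) \<omega>) * indicator (As (Suc N)) \<omega> \<partial>M)"
      by (rule intG)
    also have "(\<integral>\<^sup>+\<omega>. h (Y (Suc N) \<omega>) * indicator (As (Suc N)) \<omega> \<partial>M) =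
        (\<integral>\<^sup>+\<omega>. Pk b h (Y N \<omega>) * indicator (As (Suc N)) \<omega> \<partial>M)"
    proof (rule MP[OF As_sets])
      fix \<omega> \<omega>' assume "pth N \<omega> = pth N \<omega>'" "\<omega> \<in> As (Suc N)" "\<omega>' \<in> space M"
      then show "\<omega>' \<in> As (Suc N)"
        unfolding As_def pth_def fun_eq_iff by (auto simp: less_Suc_eq_le) metis
    qed
    also have "emeasure M (Hs (Suc N)) + (\<integral>\<^sup>+\<omega>. Pk b h (Y N \<omega>) * indicator (As (Suc N)) \<omega> \<partial>M)
        = (\<integral>\<^sup>+\<omega>. indicator (Hs (Suc N)) \<omega> + Pk b h (Y N \<omega>) * indicator (As (Suc N)) \<omega> \<partial>M)"
      by (subst nn_integral_add) (auto intro: borel_measurable_indicator[OF Hs_sets] mG2 simp: Hs_sets)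
    also have "\<dots> \<le> integral\<^sup>N M (G N)"
    proof (rule nn_integral_mono_AE)
      show "AE \<omega> in M. indicator (Hs (Suc N)) \<omega> + Pk b h (Y N \<omega>) * indicator (As (Suc N)) \<omega> \<le> G N \<omega>"
        using ae_R AE_space
      proof eventually_elim
        case (elim \<omega>)
        have R: "Y N \<omega> \<in> R" using elim by simp
        show ?case
        proof (cases "\<omega> \<in> As N")
          case False
          then have "\<omega> \<in> Hs N" "\<omega> \<in> Hs (Suc N)" "\<omega> \<notin> As (Suc N)"
            using elim(2) by (auto simp: Hs_def As_def intro: less_SucI)
          then show ?thesis using False by (simp add: G_def)
        next
          case True
          show ?thesis
          proof (cases "Y N \<omega> \<in> B")
            case True
            then have "\<omega> \<notin> Hs N" "\<omega> \<in> Hs (Suc N)" "\<omega> \<notin> As (Suc N)"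
              using elim(2) \<open>\<omega> \<in> As N\<close> by (auto simp: Hs_def As_def)
            then show ?thesis using \<open>\<omega> \<in> As N\<close> h1[OF R True] by (simp add: G_def)
          next
            case False
            then have "\<omega> \<notin> Hs N" "\<omega> \<notin> Hs (Suc N)" "\<omega> \<in> As (Suc N)"
              using elim(2) \<open>\<omega> \<in> As N\<close> by (auto simp: Hs_def As_def less_Suc_eq)
            then show ?thesis using \<open>\<omega> \<in> As N\<close> hB[OF R False] by (simp add: G_def)
          qed
        qed
      qed
    qed
    finally show ?thesis .
  qed
  have Gle: "integral\<^sup>N M (G N) \<le> h root" for N
  proof (induction N)
    case 0 then show ?case by (simp add: G0)
  next
    case (Suc N) then show ?case using Gstep[of N] by (rule order_trans[rotated])
  qed
  have HsG: "emeasure M (Hs N) \<le> h root" for N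
    using Gle[of N] by (simp add: intG) (metis add_increasing2 le_iff_add order_trans zero_le)
  have "{\<omega>\<in>space M. \<exists>n. Y n \<omega> \<in> B} = (\<Union>N. Hs N)" by (auto simp: Hs_def)
  moreover have "(SUP N. emeasure M (Hs N)) = emeasure M (\<Union>N. Hs N)"
  proof (rule SUP_emeasure_incseq)
    show "range Hs \<subseteq> sets M" using Hs_sets by auto
    show "incseq Hs" by (auto simp: incseq_def Hs_def) (meson le_trans less_le_trans)
  qed
  ultimately show ?thesis using HsG by (metis SUP_least)
qed

lemma Qk_nonneg: "(\<And>s. V s \<ge> 0) \<Longrightarrow> Qk b V s \<ge> 0"
  using b2 by (auto simp: Qk_def split: prod.splits intro!: add_nonneg_nonneg divide_nonneg_nonneg mult_nonneg_nonneg)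

lemma E1: "(\<integral>\<^sup>+\<omega>. (\<Sum>n. indicator {x. phi x = (p0, d0)} (Y n \<omega>)) \<partial>M) \<le> 4"
proof -
  have "(\<integral>\<^sup>+\<omega>. (\<Sum>n. indicator {x. phi x = (p0, d0)} (Y n \<omega>)) \<partial>M) \<le> ennreal (V1 p0 d0 (phi root))"
  proof (rule visits[where V = "\<lambda>y. ennreal (V1 p0 d0 (phi y))"])
    fix x assume x: "x \<in> R"
    have "Pk b (\<lambda>y. ennreal (V1 p0 d0 (phi y))) x + indicator {x. phi x = (p0, d0)} x
        = ennreal (Qk b (V1 p0 d0) (phi x) + (if phi x = (p0, d0) then 1 else 0))"
      using Pk_phi[OF x, of "V1 p0 d0", OF V1_nonneg] V1_ok[of p0 d0 "phi x"] V1_nonneg[of p0 d0 "phi x"]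
        Qk_nonneg[of "V1 p0 d0" "phi x", OF V1_nonneg]
      by (auto simp: indicator_def ennreal_plus)
    also have "\<dots> \<le> ennreal (V1 p0 d0 (phi x))"
      by (rule ennreal_leI[OF V1_ok])
    finally show "Pk b (\<lambda>y. ennreal (V1 p0 d0 (phi y))) x + indicator {x. phi x = (p0, d0)} x
        \<le> ennreal (V1 p0 d0 (phi x))" .
  qed
  also have "V1 p0 d0 (phi root) = 4" by (simp add: phi_root V1_def)
  finally show ?thesis by simp
qed

lemma Qk_scale: "Qk b (\<lambda>s. c * V s) s = c * Qk b V s"
  by (simp add: Qk_def field_simps split: prod.splits)

lemma E2:
  assumes "dd \<ge> 1"
  shows "emeasure M {\<omega>\<in>space M. \<exists>n. Y n \<omega> \<in> {x. fst (phi x) = p0 \<and> snd (phi x) \<ge> dd}} \<le> ennreal (2 / (real dd + 2))"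
proof -
  define c where "c = 2 / (real dd + 2)"
  have c0: "c \<ge> 0" by (simp add: c_def)
  have "emeasure M {\<omega>\<in>space M. \<exists>n. Y n \<omega> \<in> {x. fst (phi x) = p0 \<and> snd (phi x) \<ge> dd}}
      \<le> ennreal (c * h2 p0 (phi root))"
  proof (rule hitting[where h = "\<lambda>y. ennreal (c * h2 p0 (phi y))"])
    fix x assume x: "x \<in> R" "x \<notin> {x. fst (phi x) = p0 \<and> snd (phi x) \<ge> dd}"
    have "Pk b (\<lambda>y. ennreal (c * h2 p0 (phi y))) x = ennreal (Qk b (\<lambda>s. c * h2 p0 s) (phi x))"
      by (rule Pk_phi[OF x(1)]) (simp add: c0 h2_nonneg)
    also have "\<dots> = ennreal (c * Qk b (h2 p0) (phi x))" by (simp add: Qk_scale)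
    also have "\<dots> \<le> ennreal (c * h2 p0 (phi x))"
      using h2_ok[of "phi x" p0 dd] x(2) assms c0 by (intro ennreal_leI mult_left_mono) auto
    finally show "Pk b (\<lambda>y. ennreal (c * h2 p0 (phi y))) x \<le> ennreal (c * h2 p0 (phi x))" .
  next
    fix x assume x: "x \<in> R" "x \<in> {x. fst (phi x) = p0 \<and> snd (phi x) \<ge> dd}"
    then obtain dl where pd: "phi x = (p0, dl)" "dl \<ge> dd" by (cases "phi x") auto
    have "1 \<le> c * (1 + real dl / 2)"
      using pd(2) by (simp add: c_def field_simps)
    then show "1 \<le> ennreal (c * h2 p0 (phi x))"
      using pd by (simp add: h2_def ennreal_1[symmetric] del: ennreal_1)
  qed
  also have "c * h2 p0 (phi root) = c" by (simp add: phi_root h2_def)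
  finally show ?thesis by (simp add: c_def)
qed

lemma suminf_swap_ennreal: "(\<Sum>n. \<Sum>p. g n p) = (\<Sum>p. \<Sum>n. (g n p :: ennreal))"
proof -
  have "(\<Sum>n. \<Sum>p. g n p) = (\<Sum>n. \<integral>\<^sup>+p. g n p \<partial>count_space UNIV)"
    by (simp add: nn_integral_count_space_nat)
  also have "\<dots> = (\<integral>\<^sup>+p. (\<Sum>n. g n p) \<partial>count_space UNIV)"
    by (rule nn_integral_suminf[symmetric]) simp
  also have "\<dots> = (\<Sum>p. \<Sum>n. g n p)" by (simp add: nn_integral_count_space_nat)
  finally show ?thesis .
qed

lemma finite_of_sum_ind: "(\<Sum>p. indicator S p :: ennreal) \<noteq> \<top> \<Longrightarrow> finite (S :: nat set)"
proof -
  assume a: "(\<Sum>p. indicator S p :: ennreal) \<noteq> \<top>"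
  have "(\<Sum>p. indicator S p :: ennreal) = (\<integral>\<^sup>+p. indicator S p \<partial>count_space UNIV)"
    by (simp add: nn_integral_count_space_nat)
  also have "\<dots> = emeasure (count_space UNIV) S" by simp
  also have "\<dots> = (if finite S then of_nat (card S) else \<infinity>)" by (rule emeasure_count_space) simp
  finally show ?thesis using a by (auto split: if_splits)
qed

lemma sets_ex: "{\<omega>\<in>space M. \<exists>n. Y n \<omega> \<in> S} \<in> sets M"
proof -
  have "{\<omega>\<in>space M. \<exists>n. Y n \<omega> \<in> S} = (\<Union>n\<in>UNIV. {\<omega>\<in>space M. Y n \<omega> \<in> S})" by auto
  also have "\<dots> \<in> sets M" by (rule sets.countable_UN) (auto intro: sets_Y)
  finally show ?thesis .
qed

lemma cnt_meas: "(\<lambda>\<omega>. \<Sum>n. indicator S (Y n \<omega>) :: ennreal) \<in> borel_measurable M"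
  by (rule borel_measurable_suminf_order) (rule fun_Y_borel)

lemma ae_depth: "AE \<omega> in M. \<forall>p. \<exists>D. \<forall>n. fst (phi (Y n \<omega>)) = p \<longrightarrow> snd (phi (Y n \<omega>)) < D"
proof -
  have "AE \<omega> in M. \<exists>D. \<forall>n. fst (phi (Y n \<omega>)) = p \<longrightarrow> snd (phi (Y n \<omega>)) < D" for p
  proof -
    define S where "S d = {\<omega>\<in>space M. \<exists>n. Y n \<omega> \<in> {x. fst (phi x) = p \<and> snd (phi x) \<ge> d}}" for d
    define C where "C = (\<Inter>d\<in>UNIV. S d)"
    have S_sets: "S d \<in> sets M" for d unfolding S_def by (rule sets_ex)
    have C_sets: "C \<in> sets M" unfolding C_def by (rule sets.countable_INT) (auto intro: S_sets)
    have CS: "measure M C \<le> 2 / (real d + 2)" if "d \<ge> 1" for d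
    proof -
      have "emeasure M C \<le> emeasure M (S d)"
        by (rule emeasure_mono[OF _ S_sets]) (auto simp: C_def)
      also have "\<dots> \<le> ennreal (2 / (real d + 2))" unfolding S_def by (rule E2[OF that])
      finally show ?thesis by (simp add: emeasure_eq_measure ennreal_le_iff)
    qed
    have "measure M C \<le> 0"
    proof (rule ccontr)
      assume "\<not> measure M C \<le> 0"
      then have pos: "measure M C > 0" by simp
      obtain d :: nat where d: "2 / measure M C < real d" using reals_Archimedean2 by blast
      have "0 < 2 / measure M C" using pos by simp
      then have d1: "d \<ge> 1" using d by (cases d) auto
      have "2 / (real d + 2) < 2 / (2 / measure M C)"
        using d pos by (intro divide_strict_left_mono) auto
      then have "2 / (real d + 2) < measure M C" using pos by simp
      then show False using CS[OF d1] by simp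
    qed
    then have "measure M C = 0" using measure_nonneg[of M C] by linarith
    then have "C \<in> null_sets M" using C_sets by (simp add: emeasure_eq_measure null_sets_def)
    then show ?thesis
    proof (rule AE_I')
      show "{\<omega>\<in>space M. \<not> (\<exists>D. \<forall>n. fst (phi (Y n \<omega>)) = p \<longrightarrow> snd (phi (Y n \<omega>)) < D)} \<subseteq> C"
        by (auto simp: C_def S_def not_less)
    qed
  qed
  then show ?thesis by (simp add: AE_all_countable)
qed

lemma real_ineq1:
  fixes x :: real assumes "0 \<le> x" "x \<le> 1"
  shows "x * real (nat \<lceil>1 / sqrt x\<rceil>) * 4 \<le> 8 * sqrt x"
proof (cases "x = 0")
  case True then show ?thesis by simp
next
  case False
  define t where "t = sqrt x"
  have t: "0 < t" "t \<le> 1" "x = t * t" using assms False by (auto simp: t_def real_sqrt_le_1_iff)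
  have "real (nat \<lceil>1 / t\<rceil>) \<le> 1 / t + 1"
    using t by (simp add: of_nat_nat)
  then have "x * real (nat \<lceil>1 / t\<rceil>) \<le> x * (1 / t + 1)" using assms(1) by (rule mult_left_mono)
  also have "x * (1 / t + 1) = t * t * (1 / t + 1)" using t by simp
  also have "\<dots> = t + t * t" using t by (simp add: field_simps)
  also have "\<dots> \<le> 2 * t"
  proof -
    have "t * t \<le> t * 1" using t by (intro mult_left_mono) auto
    then show ?thesis by linarith
  qed
  finally show ?thesis by (simp add: t_def)
qed

lemma real_ineq2:
  fixes x :: real assumes "0 < x" "x \<le> 1"
  shows "nat \<lceil>1 / sqrt x\<rceil> \<ge> 1" "2 / (real (nat \<lceil>1 / sqrt x\<rceil>) + 2) \<le> 2 * sqrt x"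
proof -
  define t where "t = sqrt x"
  have t: "0 < t" "t \<le> 1" using assms by (auto simp: t_def real_sqrt_le_1_iff)
  have "1 / t \<ge> 1" using t by simp
  then have c: "real (nat \<lceil>1 / t\<rceil>) \<ge> 1 / t" by (simp add: of_nat_nat)
  then show "nat \<lceil>1 / sqrt x\<rceil> \<ge> 1" using \<open>1 / t \<ge> 1\<close> unfolding t_def by linarith
  define r where "r = real (nat \<lceil>1 / t\<rceil>)"
  have "t * r \<ge> t * (1 / t)" using c t unfolding r_def by (intro mult_left_mono) auto
  then have tr: "t * r \<ge> 1" using t by simp
  have r0: "r \<ge> 0" by (simp add: r_def)
  have "2 * t * (r + 2) = 2 * (t * r) + 4 * t" by (simp add: algebra_simps)
  then have "2 \<le> 2 * t * (r + 2)" using tr t r0 by linarith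
  then have "2 / (r + 2) \<le> 2 * t" using r0 by (simp add: divide_le_eq)
  then show "2 / (real (nat \<lceil>1 / sqrt x\<rceil>) + 2) \<le> 2 * sqrt x" by (simp add: t_def r_def)
qed

end



context mc begin

lemma main:
  fixes f :: "real \<Rightarrow> real"
  assumes hf: "\<forall>x\<ge>0. 0 \<le> f x \<and> f x \<le> 1" and sf: "summable (\<lambda>p::nat. sqrt (f (real p)))"
  shows "AE \<omega> in M. summable (\<lambda>n. f (- real_of_int (meet_height root (Y n \<omega>))))"
proof -
  define fp where "fp p = f (real p)" for p :: nat
  define s where "s p = sqrt (fp p)" for p
  define dd where "dd p = nat \<lceil>1 / s p\<rceil>" for p
  have fp01: "0 \<le> fp p" "fp p \<le> 1" for p using hf by (auto simp: fp_def)
  define cnt where "cnt p d \<omega> = (\<Sum>n. indicator {x. phi x = (p, d)} (Y n \<omega>) :: ennreal)" for p d \<omega>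
  define Z1 where "Z1 \<omega> = (\<Sum>p. \<Sum>d<dd p. ennreal (fp p) * cnt p d \<omega>)" for \<omega>
  define Bev where "Bev p = {\<omega>\<in>space M. \<exists>n. Y n \<omega> \<in> {x. fst (phi x) = p \<and> snd (phi x) \<ge> dd p}}" for p
  define Z2 where "Z2 \<omega> = (\<Sum>p. if fp p > 0 then indicator (Bev p) \<omega> else 0 :: ennreal)" for \<omega>
  have cnt_m: "cnt p d \<in> borel_measurable M" for p d unfolding cnt_def[abs_def] by (rule cnt_meas)
  have Bev_sets: "Bev p \<in> sets M" for p unfolding Bev_def by (rule sets_ex)
  have sfin: "(\<Sum>p. ennreal (c * s p)) \<noteq> \<top>" if "c \<ge> 0" for c
    using that fp01 by (intro ennreal_suminf_neq_top summable_mult) (auto simp: s_def sf[unfolded fp_def[symmetric]])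
  have Z1_m: "Z1 \<in> borel_measurable M"
    unfolding Z1_def[abs_def]
    by (intro borel_measurable_suminf_order borel_measurable_sum borel_measurable_times_ennreal measurable_const cnt_m) simp
  have int_Z1: "integral\<^sup>N M Z1 \<le> (\<Sum>p. ennreal (8 * s p))"
  proof -
    have "integral\<^sup>N M Z1 = (\<Sum>p. \<integral>\<^sup>+\<omega>. (\<Sum>d<dd p. ennreal (fp p) * cnt p d \<omega>) \<partial>M)"
      unfolding Z1_def
      by (rule nn_integral_suminf)
        (intro borel_measurable_sum borel_measurable_times_ennreal measurable_const cnt_m, simp)
    also have "\<dots> \<le> (\<Sum>p. ennreal (8 * s p))"
    proof (rule suminf_le[OF _ summableI summableI])
      fix p
      have "(\<integral>\<^sup>+\<omega>. (\<Sum>d<dd p. ennreal (fp p) * cnt p d \<omega>) \<partial>M) = (\<Sum>d<dd p. \<integral>\<^sup>+\<omega>. ennreal (fp p) * cnt p d \<omega> \<partial>M)"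
        by (rule nn_integral_sum) (intro borel_measurable_times_ennreal measurable_const cnt_m, simp)
      also have "\<dots> = (\<Sum>d<dd p. ennreal (fp p) * integral\<^sup>N M (cnt p d))"
        by (rule sum.cong[OF refl]) (rule nn_integral_cmult[OF cnt_m])
      also have "\<dots> \<le> (\<Sum>d<dd p. ennreal (fp p) * 4)"
        by (intro sum_mono mult_left_mono) (use E1 in \<open>auto simp: cnt_def[abs_def]\<close>)
      also have "\<dots> = ennreal (fp p * real (dd p) * 4)"
        using fp01[of p] by (simp add: ennreal_mult ennreal_of_nat_eq_real_of_nat mult_ac)
      also have "\<dots> \<le> ennreal (8 * s p)"
        unfolding dd_def s_def using fp01[of p] by (intro ennreal_leI real_ineq1) auto
      finally show "(\<integral>\<^sup>+\<omega>. (\<Sum>d<dd p. ennreal (fp p) * cnt p d \<omega>) \<partial>M) \<le> ennreal (8 * s p)" .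
    qed
    finally show ?thesis .
  qed
  have ifm: "(\<lambda>\<omega>. if fp p > 0 then indicator (Bev p) \<omega> else 0 :: ennreal) \<in> borel_measurable M" for p
    by (cases "fp p > 0") (simp_all add: borel_measurable_indicator[OF Bev_sets])
  have Z2_m: "Z2 \<in> borel_measurable M"
    unfolding Z2_def[abs_def]
    by (intro borel_measurable_suminf_order ifm)
  have int_Z2: "integral\<^sup>N M Z2 \<le> (\<Sum>p. ennreal (2 * s p))"
  proof -
    have "integral\<^sup>N M Z2 = (\<Sum>p. \<integral>\<^sup>+\<omega>. (if fp p > 0 then indicator (Bev p) \<omega> else 0) \<partial>M)"
      unfolding Z2_def
      by (rule nn_integral_suminf) (rule ifm)
    also have "\<dots> \<le> (\<Sum>p. ennreal (2 * s p))"
    proof (rule suminf_le[OF _ summableI summableI])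
      fix p
      show "(\<integral>\<^sup>+\<omega>. (if fp p > 0 then indicator (Bev p) \<omega> else 0) \<partial>M) \<le> ennreal (2 * s p)"
      proof (cases "fp p > 0")
        case True
        have d1: "dd p \<ge> 1" and le: "2 / (real (dd p) + 2) \<le> 2 * s p"
          using real_ineq2[OF True fp01(2)] by (auto simp: dd_def s_def)
        have "(\<integral>\<^sup>+\<omega>. (if fp p > 0 then indicator (Bev p) \<omega> else 0) \<partial>M) = emeasure M (Bev p)"
          using True Bev_sets by simp
        also have "\<dots> \<le> ennreal (2 / (real (dd p) + 2))" unfolding Bev_def by (rule E2[OF d1])
        also have "\<dots> \<le> ennreal (2 * s p)" by (rule ennreal_leI[OF le])
        finally show ?thesis .
      qed simp
    qed
    finally show ?thesis .
  qed
  have A1: "AE \<omega> in M. Z1 \<omega> \<noteq> \<top>"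
  proof -
    have "integral\<^sup>N M Z1 \<noteq> \<infinity>" using int_Z1 sfin[of 8] by (auto simp: top_unique)
    from nn_integral_noteq_infinite[OF Z1_m this] show ?thesis by simp
  qed
  have A2: "AE \<omega> in M. Z2 \<omega> \<noteq> \<top>"
  proof -
    have "integral\<^sup>N M Z2 \<noteq> \<infinity>" using int_Z2 sfin[of 2] by (auto simp: top_unique)
    from nn_integral_noteq_infinite[OF Z2_m this] show ?thesis by simp
  qed
  have A3: "AE \<omega> in M. \<forall>p d. cnt p d \<omega> \<noteq> \<top>"
  proof -
    have "AE \<omega> in M. cnt p d \<omega> \<noteq> \<top>" for p d
    proof -
      have "integral\<^sup>N M (cnt p d) \<noteq> \<infinity>" using E1[of p d] by (auto simp: cnt_def[abs_def] top_unique)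
      from nn_integral_noteq_infinite[OF cnt_m this] show ?thesis by simp
    qed
    then show ?thesis by (simp add: AE_all_countable)
  qed
  show ?thesis
    using A1 A2 A3 ae_depth ae_R AE_space
  proof eventually_elim
    case (elim \<omega>)
    define pn where "pn n = fst (phi (Y n \<omega>))" for n
    define dn where "dn n = snd (phi (Y n \<omega>))" for n
    have phin: "phi (Y n \<omega>) = (pn n, dn n)" for n by (simp add: pn_def dn_def)
    have ind: "indicator {x. phi x = (p, d)} (Y n \<omega>) = (if pn n = p \<and> dn n = d then 1 else (0::ennreal))" for p d n
      by (simp add: indicator_def phin)
    from elim(4) obtain D where D: "\<And>p n. pn n = p \<Longrightarrow> dn n < D p"
      unfolding pn_def dn_def by metis
    define Fin where "Fin = {p. fp p > 0 \<and> \<omega> \<in> Bev p}"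
    have "Z2 \<omega> = (\<Sum>p. indicator Fin p)"
      unfolding Z2_def by (rule suminf_cong) (auto simp: Fin_def indicator_def)
    then have finF: "finite Fin" using elim(2) finite_of_sum_ind by simp
    define a where "a n = (\<Sum>p. \<Sum>d<dd p. ennreal (fp p) * indicator {x. phi x = (p, d)} (Y n \<omega>))" for n
    define c where "c n = (\<Sum>p. if p \<in> Fin then \<Sum>d<D p. indicator {x. phi x = (p, d)} (Y n \<omega>) else (0::ennreal))" for n
    have key: "ennreal (fp (pn n)) \<le> a n + c n" for n
    proof (cases "dn n < dd (pn n)")
      case True
      have "ennreal (fp (pn n)) = ennreal (fp (pn n)) * indicator {x. phi x = (pn n, dn n)} (Y n \<omega>)"
        by (simp add: ind)
      also have "\<dots> \<le> (\<Sum>d<dd (pn n). ennreal (fp (pn n)) * indicator {x. phi x = (pn n, d)} (Y n \<omega>))"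
        by (rule member_le_sum[where f = "\<lambda>d. ennreal (fp (pn n)) * indicator {x. phi x = (pn n, d)} (Y n \<omega>)"]) (use True in auto)
      also have "\<dots> \<le> a n"
        unfolding a_def
        using sum_le_suminf[OF summableI, of "{pn n}" "\<lambda>p. \<Sum>d<dd p. ennreal (fp p) * indicator {x. phi x = (p, d)} (Y n \<omega>)"]
        by simp
      also have "\<dots> \<le> a n + c n" by simp
      finally show ?thesis .
    next
      case False
      show ?thesis
      proof (cases "fp (pn n) > 0")
        case pos: True
        have "\<omega> \<in> Bev (pn n)"
          unfolding Bev_def using elim(6) False phin[of n] by (auto intro!: exI[of _ n] simp: not_less)
        then have F: "pn n \<in> Fin" using pos by (simp add: Fin_def)
        have "ennreal (fp (pn n)) \<le> 1" using fp01 by simp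
        also have "1 = (indicator {x. phi x = (pn n, dn n)} (Y n \<omega>) :: ennreal)" by (simp add: ind)
        also have "\<dots> \<le> (\<Sum>d<D (pn n). indicator {x. phi x = (pn n, d)} (Y n \<omega>) :: ennreal)"
          by (rule member_le_sum[where f = "\<lambda>d. indicator {x. phi x = (pn n, d)} (Y n \<omega>) :: ennreal"]) (use D in auto)
        also have "\<dots> = (if pn n \<in> Fin then \<Sum>d<D (pn n). indicator {x. phi x = (pn n, d)} (Y n \<omega>) else (0::ennreal))"
          using F by simp
        also have "\<dots> \<le> c n"
          unfolding c_def
          using sum_le_suminf[OF summableI, of "{pn n}" "\<lambda>p. if p \<in> Fin then \<Sum>d<D p. indicator {x. phi x = (p, d)} (Y n \<omega>) else (0::ennreal)"]
          by simp
        also have "\<dots> \<le> a n + c n" by simp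
        finally show ?thesis .
      next
        case nonpos: False
        then have "fp (pn n) = 0" using fp01[of "pn n"] by linarith
        then show ?thesis by simp
      qed
    qed
    have sa: "(\<Sum>n. a n) = Z1 \<omega>"
    proof -
      have "(\<Sum>n. a n) = (\<Sum>p. \<Sum>n. \<Sum>d<dd p. ennreal (fp p) * indicator {x. phi x = (p, d)} (Y n \<omega>))"
        unfolding a_def by (rule suminf_swap_ennreal)
      also have "\<dots> = (\<Sum>p. \<Sum>d<dd p. \<Sum>n. ennreal (fp p) * indicator {x. phi x = (p, d)} (Y n \<omega>))"
        by (rule suminf_cong) (rule suminf_sum[OF summableI])
      also have "\<dots> = Z1 \<omega>"
        unfolding Z1_def cnt_def by simp
      finally show ?thesis .
    qed
    have sc: "(\<Sum>n. c n) = (\<Sum>p\<in>Fin. \<Sum>d<D p. cnt p d \<omega>)"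
    proof -
      have "(\<Sum>n. c n) = (\<Sum>p. \<Sum>n. if p \<in> Fin then \<Sum>d<D p. indicator {x. phi x = (p, d)} (Y n \<omega>) else (0::ennreal))"
        unfolding c_def by (rule suminf_swap_ennreal)
      also have "\<dots> = (\<Sum>p. if p \<in> Fin then \<Sum>d<D p. cnt p d \<omega> else 0)"
      proof (rule suminf_cong)
        fix p
        show "(\<Sum>n. if p \<in> Fin then \<Sum>d<D p. indicator {x. phi x = (p, d)} (Y n \<omega>) else (0::ennreal))
            = (if p \<in> Fin then \<Sum>d<D p. cnt p d \<omega> else 0)"
          by (cases "p \<in> Fin") (simp_all add: cnt_def suminf_sum[OF summableI])
      qed
      also have "\<dots> = (\<Sum>p\<in>Fin. if p \<in> Fin then \<Sum>d<D p. cnt p d \<omega> else 0)"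
        by (rule suminf_finite[OF finF]) simp
      also have "\<dots> = (\<Sum>p\<in>Fin. \<Sum>d<D p. cnt p d \<omega>)" by simp
      finally show ?thesis .
    qed
    have "(\<Sum>n. ennreal (fp (pn n))) \<le> (\<Sum>n. a n + c n)"
      by (rule suminf_le[OF key summableI summableI])
    also have "\<dots> = (\<Sum>n. a n) + (\<Sum>n. c n)"
      by (rule suminf_add[OF summableI summableI, symmetric])
    also have "\<dots> = Z1 \<omega> + (\<Sum>p\<in>Fin. \<Sum>d<D p. cnt p d \<omega>)" by (simp add: sa sc)
    finally have le: "(\<Sum>n. ennreal (fp (pn n))) \<le> Z1 \<omega> + (\<Sum>p\<in>Fin. \<Sum>d<D p. cnt p d \<omega>)" .
    have "Z1 \<omega> + (\<Sum>p\<in>Fin. \<Sum>d<D p. cnt p d \<omega>) \<noteq> \<top>"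
      using elim(1) elim(3) finF by simp
    then have "(\<Sum>n. ennreal (fp (pn n))) \<noteq> \<top>" using le by (auto simp: top_unique)
    then have summ: "summable (\<lambda>n. fp (pn n))" by (rule summable_suminf_not_top[rotated]) (rule fp01)
    have eq: "f (- real_of_int (meet_height root (Y n \<omega>))) = fp (pn n)" for n
    proof -
      have "mh (Y n \<omega>) \<le> 0" using mh_props(1) elim(5) by blast
      then show ?thesis by (simp add: fp_def pn_def phi_def)
    qed
    show ?case unfolding eq by (rule summ)
  qed
qed

end

theorem proposition3p13:
  fixes b :: nat and root :: word and M :: "'s measure" and Y :: "nat \<Rightarrow> 's \<Rightarrow> word"
    and f :: "real \<Rightarrow> real"
  assumes "b \<ge> 2"
    and "root \<in> words b" and "height root = 0"
    and "markov_chain M Y (kernel b) root"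
    and "\<forall>x\<ge>0. 0 \<le> f x \<and> f x \<le> 1"
    and "summable (\<lambda>p::nat. sqrt (f (real p)))"
  shows "AE \<omega> in M. summable (\<lambda>n. f (- real_of_int (meet_height root (Y n \<omega>))))"
proof -
  interpret mc b root M Y
    by unfold_locales (use assms in auto)
  show ?thesis by (rule main[OF assms(5) assms(6)])
qed

end
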